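(* Let $k\ge1$ and $f\in\mathrm{Homeo}_{\,Dehn\,k,nw}(\mathbb{A})$. If $f$ has bounded diffusion, i.e. $\sup_{n\in\mathbb{Z},z\in\mathbb{A}}|\mathrm{pr}_2(f^n(z)-z)|<\infty$, then $f$ has an invariant essential circloid.
   Context: $\mathbb{A}=\mathbb{R}^2/\sim$ where $(x,y)\sim(x',y')$ iff $x-x'\in\mathbb{Z}$ and $y=y'$; $\mathbb{T}^2=\mathbb{R}^2/\mathbb{Z}^2$; $\mathrm{pr}_2$ is the second coordinate, $\mathrm{pr}_2(g(z)-z):=\mathrm{pr}_2(g(z))-\mathrm{pr}_2(z)$. $\mathrm{Homeo}_{\,Dehn\,k,nw}(\mathbb{A})$: homeomorphisms of $\mathbb{A}$ lifting a non-wandering homeomorphism of $\mathbb{T}^2$ homotopic to the Dehn twist induced by $D_k(x,y)=(x+ky,y)$ (equivalently, orientation preserving with a lift $\tilde f$ to $\mathbb{R}^2$ satisfying $\tilde f(\tilde z+(1,0))=\tilde f(\tilde z)+(1,0)$, $\tilde f(\tilde z+(0,1))=\tilde f(\tilde z)+(k,1)$). An annular continuum in $\mathbb{A}$ is a compact connected set $\mathcal{C}$ whose complement consists of exactly two disjoint essential open topological annuli, each a neighborhood of one of the two ends of $\mathbb{A}$. A circloid is an annular continuum not properly containing another annular continuum. *)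

theory Defs
  imports "HOL-Analysis.Analysis"
begin

text \<open>Concrete model of the open annulus R^2/~ : the set S^1 x R, with S^1 the unit
circle in the complex plane; the quotient map from R^2 is (x,y) |-> (cis(2 pi x), y).
The second coordinate pr_2 is snd.\<close>

definition annulus :: "(complex \<times> real) set" where
  "annulus = sphere 0 1 \<times> UNIV"

definition pA :: "real \<times> real \<Rightarrow> complex \<times> real" where
  "pA z = (cis (2 * pi * fst z), snd z)"

text \<open>Lift F : R^2 -> R^2 of a torus map is non-wandering on T^2 = R^2/Z^2:
every nonempty open set of the torus meets one of its forward iterates.\<close>
definition torus_nonwandering :: "(real \<times> real \<Rightarrow> real \<times> real) \<Rightarrow> bool" where
  "torus_nonwandering F \<longleftrightarrow>
     (\<forall>U. open U \<and> U \<noteq> {} \<longrightarrow>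
        (\<exists>n::nat. n \<ge> 1 \<and> (\<exists>z\<in>U. \<exists>p q::int. (F ^^ n) z + (of_int p, of_int q) \<in> U)))"

text \<open>Homeo_{Dehn k, nw}(A): f is a homeomorphism of A (with inverse g) having a lift
F to R^2 with F(z+(1,0)) = F(z)+(1,0), F(z+(0,1)) = F(z)+(k,1), and the induced torus
homeomorphism is non-wandering.\<close>
definition homeo_dehn_nw ::
  "int \<Rightarrow> (complex \<times> real \<Rightarrow> complex \<times> real) \<Rightarrow> (complex \<times> real \<Rightarrow> complex \<times> real) \<Rightarrow> bool" where
  "homeo_dehn_nw k f g \<longleftrightarrow>
     homeomorphism annulus annulus f g \<and>
     (\<exists>F :: real \<times> real \<Rightarrow> real \<times> real.
        continuous_on UNIV F \<and>
        (\<forall>z. pA (F z) = f (pA z)) \<and>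
        (\<forall>x y. F (x + 1, y) = F (x, y) + (1, 0)) \<and>
        (\<forall>x y. F (x, y + 1) = F (x, y) + (of_int k, 1)) \<and>
        torus_nonwandering F)"

definition essential_in_annulus :: "(complex \<times> real) set \<Rightarrow> bool" where
  "essential_in_annulus U \<longleftrightarrow>
     (\<exists>p. path p \<and> pathfinish p = pathstart p \<and> path_image p \<subseteq> U \<and>
          \<not> homotopic_loops annulus p (linepath (pathstart p) (pathstart p)))"

definition open_ess_annulus :: "(complex \<times> real) set \<Rightarrow> bool" where
  "open_ess_annulus U \<longleftrightarrow>
     U \<subseteq> annulus \<and> openin (top_of_set annulus) U \<and> U homeomorphic annulus \<and>
     essential_in_annulus U"

definition nbhd_upper_end :: "(complex \<times> real) set \<Rightarrow> bool" where
  "nbhd_upper_end U \<longleftrightarrow> (\<exists>M. {z \<in> annulus. snd z > M} \<subseteq> U)"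

definition nbhd_lower_end :: "(complex \<times> real) set \<Rightarrow> bool" where
  "nbhd_lower_end U \<longleftrightarrow> (\<exists>M. {z \<in> annulus. snd z < M} \<subseteq> U)"

definition annular_continuum :: "(complex \<times> real) set \<Rightarrow> bool" where
  "annular_continuum C \<longleftrightarrow>
     C \<subseteq> annulus \<and> compact C \<and> connected C \<and> C \<noteq> {} \<and>
     (\<exists>U1 U2. annulus - C = U1 \<union> U2 \<and> U1 \<inter> U2 = {} \<and>
        open_ess_annulus U1 \<and> open_ess_annulus U2 \<and>
        nbhd_upper_end U1 \<and> nbhd_lower_end U2)"

definition circloid :: "(complex \<times> real) set \<Rightarrow> bool" where
  "circloid C \<longleftrightarrow> annular_continuum C \<and>
     (\<forall>C'. annular_continuum C' \<and> C' \<subseteq> C \<longrightarrow> C' = C)"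

text \<open>Bounded diffusion: sup over n in Z and z in A of |pr_2(f^n z) - pr_2 z| is finite
(negative iterates are iterates of the inverse g).\<close>
definition bounded_diffusion ::
  "(complex \<times> real \<Rightarrow> complex \<times> real) \<Rightarrow> (complex \<times> real \<Rightarrow> complex \<times> real) \<Rightarrow> bool" where
  "bounded_diffusion f g \<longleftrightarrow>
     (\<exists>B::real. \<forall>n::nat. \<forall>z\<in>annulus.
        \<bar>snd ((f ^^ n) z) - snd z\<bar> \<le> B \<and> \<bar>snd ((g ^^ n) z) - snd z\<bar> \<le> B)"

end

theory Submission
  imports Defs "HOL-Complex_Analysis.Complex_Analysis"
begin


definition psi :: "complex \<times> real \<Rightarrow> complex" where
  "psi a = fst a * complex_of_real (exp (snd a))"

definition psinv :: "complex \<Rightarrow> complex \<times> real" where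
  "psinv z = (z / complex_of_real (cmod z), ln (cmod z))"

lemma annulus_iff: "a \<in> annulus \<longleftrightarrow> cmod (fst a) = 1"
  by (cases a) (auto simp: annulus_def)

lemma norm_psi: "a \<in> annulus \<Longrightarrow> cmod (psi a) = exp (snd a)"
  by (simp add: psi_def annulus_iff norm_mult)

lemma psi_nz: "a \<in> annulus \<Longrightarrow> psi a \<noteq> 0"
  using norm_psi by fastforce

lemma psinv_psi: "a \<in> annulus \<Longrightarrow> psinv (psi a) = a"
proof -
  assume a: "a \<in> annulus"
  have n: "cmod (psi a) = exp (snd a)" using norm_psi[OF a] .
  have "psi a / complex_of_real (exp (snd a)) = fst a" by (simp add: psi_def)
  then show ?thesis by (simp add: psinv_def n prod_eq_iff)
qed

lemma psinv_in: "z \<noteq> 0 \<Longrightarrow> psinv z \<in> annulus"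
  by (simp add: psinv_def annulus_iff norm_divide)

lemma psi_psinv: "z \<noteq> 0 \<Longrightarrow> psi (psinv z) = z"
  by (simp add: psinv_def psi_def)

lemma snd_psinv: "snd (psinv z) = ln (cmod z)"
  by (simp add: psinv_def)

lemma cont_psi: "continuous_on S psi"
  unfolding psi_def by (intro continuous_intros)

lemma cont_psinv: "continuous_on (-{0}) psinv"
  unfolding psinv_def by (intro continuous_intros) auto

lemma homeo_psi: "homeomorphism annulus (-{0}) psi psinv"
proof (rule homeomorphismI)
  show "continuous_on annulus psi" by (rule cont_psi)
  show "continuous_on (-{0}) psinv" by (rule cont_psinv)
  show "psi ` annulus \<subseteq> -{0}" using psi_nz by auto
  show "psinv ` (-{0}) \<subseteq> annulus" using psinv_in by blast
  show "\<And>x. x \<in> annulus \<Longrightarrow> psinv (psi x) = x" by (rule psinv_psi)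
  show "\<And>y. y \<in> -{0} \<Longrightarrow> psi (psinv y) = y" using psi_psinv by auto
qed

lemma annulus_homeomorphic: "annulus homeomorphic (-{0::complex})"
  using homeo_psi homeomorphic_def by blast

lemma connected_annulus: "connected annulus"
  unfolding annulus_def by (intro connected_Times connected_sphere) auto



lemma homeo_ball_UNIV0:
  "homeomorphism (ball (0::complex) 1) UNIV (\<lambda>z. z /\<^sub>R (1 - norm z)) (\<lambda>z. z /\<^sub>R (1 + norm z))"
proof (rule homeomorphismI)
  have "x \<in> (\<lambda>z. z /\<^sub>R (1 - norm z)) ` ball 0 1" for x::complex
    apply (rule_tac x="x /\<^sub>R (1 + norm x)" in image_eqI)
     apply (auto simp: field_split_simps)
    using norm_ge_zero [of x] apply linarith+
    done
  then show "(\<lambda>z::complex. z /\<^sub>R (1 - norm z)) ` ball 0 1 \<subseteq> UNIV"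
    by blast
  show "(\<lambda>z::complex. z /\<^sub>R (1 + norm z)) ` UNIV \<subseteq> ball 0 1"
    by (force simp: field_split_simps dest: add_less_zeroD)
  show "continuous_on (ball 0 1) (\<lambda>z::complex. z /\<^sub>R (1 - norm z))"
    by (rule continuous_intros | force)+
  have 0: "\<And>z::complex. 1 + norm z \<noteq> 0"
    by (metis (no_types) le_add_same_cancel1 norm_ge_zero not_one_le_zero)
  then show "continuous_on UNIV (\<lambda>z::complex. z /\<^sub>R (1 + norm z))"
    by (auto intro!: continuous_intros)
  show "\<And>x::complex. x \<in> ball 0 1 \<Longrightarrow>
         x /\<^sub>R (1 - norm x) /\<^sub>R (1 + norm (x /\<^sub>R (1 - norm x))) = x"
    by (auto simp: field_split_simps)
  show "\<And>y::complex. y \<in> UNIV \<Longrightarrow> y /\<^sub>R (1 + norm y) /\<^sub>R (1 - norm (y /\<^sub>R (1 + norm y))) = y"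
    using 0 by (auto simp: field_split_simps)
qed

lemma punctured_disc_homeo:
  fixes S :: "complex set"
  assumes "open S" "bounded S" "connected S" "0 \<in> S" "connected (-S)"
  shows "(S - {0}) homeomorphic (-{0::complex})"
proof -
  have "simply_connected S" using simply_connected_iff_simple assms by blast
  then have "S homeomorphic ball (0::complex) 1"
    using simply_connected_eq_homeomorphic_to_disc assms by blast
  then obtain h k where hk: "homeomorphism S (ball (0::complex) 1) h k" unfolding homeomorphic_def by blast
  have h0: "h 0 \<in> ball 0 1" using hk assms(4) unfolding homeomorphism_def by blast
  have ah: "affine hull (ball (0::complex) 1) = UNIV"
    by (rule affine_hull_nonempty_interior) simp
  have "\<exists>m m'. homeomorphism (ball 0 1) (ball 0 1) m m' \<and> m (h 0) = (0::complex)"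
    by (rule homeomorphism_moving_point[of "ball (0::complex) 1" "ball 0 1" "h 0" 0]) (use h0 in \<open>auto simp: ah\<close>)
  then obtain m m' where mm: "homeomorphism (ball 0 1) (ball 0 1) m m'" "m (h 0) = (0::complex)"
    by blast
  define \<phi> where "\<phi> = (\<lambda>z::complex. z /\<^sub>R (1 - norm z))"
  define \<phi>' where "\<phi>' = (\<lambda>z::complex. z /\<^sub>R (1 + norm z))"
  have hp: "homeomorphism (ball 0 1) UNIV \<phi> \<phi>'"
    unfolding \<phi>_def \<phi>'_def by (rule homeo_ball_UNIV0)
  define \<Phi> where "\<Phi> = \<phi> \<circ> (m \<circ> h)"
  define \<Phi>' where "\<Phi>' = (k \<circ> m') \<circ> \<phi>'"
  have H: "homeomorphism S UNIV \<Phi> \<Phi>'"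
    unfolding \<Phi>_def \<Phi>'_def
    by (rule homeomorphism_compose[OF homeomorphism_compose[OF hk mm(1)] hp])
  have P0: "\<Phi> 0 = 0" by (simp add: \<Phi>_def mm(2) \<phi>_def)
  have inj: "inj_on \<Phi> S" using H unfolding homeomorphism_def by (metis inj_on_inverseI)
  have im: "\<Phi> ` S = UNIV" using H unfolding homeomorphism_def by blast
  have "\<Phi> ` (S - {0}) = \<Phi> ` S - \<Phi> ` {0}"
    by (rule inj_on_image_set_diff[OF inj]) (use assms(4) in auto)
  then have "\<Phi> ` (S - {0}) = -{0}" using im P0 by auto
  then have "homeomorphism (S - {0}) (-{0}) \<Phi> \<Phi>'"
    by (intro homeomorphism_of_subsets[OF H]) auto
  then show ?thesis unfolding homeomorphic_def by blast
qed

lemma puncture_connected: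
  fixes X :: "complex set"
  assumes "closed X" "connected X" "ball 0 r \<subseteq> X" "0 < r"
  shows "connected (X - {0})"
proof -
  have c1: "connected (X \<inter> -(ball 0 (r/2)))"
  proof (rule unicoherentD[OF unicoherent_UNIV])
    show "connected X" by fact
    show "connected (-(ball (0::complex) (r/2)))"
      by (rule connected_complement_bounded_convex) auto
    have "ball 0 (r/2) \<subseteq> ball (0::complex) r" using assms(4) by auto
    then show "UNIV = X \<union> -(ball 0 (r/2))" using assms(3) by auto
    show "closedin (top_of_set UNIV) X" using assms(1) by simp
    show "closedin (top_of_set UNIV) (-(ball (0::complex) (r/2)))" by (simp add: closed_Compl)
  qed
  have c2: "connected (ball 0 r - {0::complex})" by (rule connected_punctured_ball) simp
  have eq: "X - {0} = (X \<inter> -(ball 0 (r/2))) \<union> (ball 0 r - {0})"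
  proof -
    have "x \<in> X \<inter> -(ball 0 (r/2)) \<or> x \<in> ball 0 r - {0}" if "x \<in> X" "x \<noteq> 0" for x
      using that assms(4) by (cases "norm x < r/2") auto
    then show ?thesis using assms(3,4) by auto
  qed
  have ne: "(X \<inter> -(ball 0 (r/2))) \<inter> (ball 0 r - {0}) \<noteq> {}"
  proof -
    have "complex_of_real (3*r/4) \<in> (X \<inter> -(ball 0 (r/2))) \<inter> (ball 0 r - {0})"
      using assms(3,4) by auto
    then show ?thesis by blast
  qed
  show ?thesis using connected_Un[OF c1 c2 ne] eq by simp
qed

lemma outer_homeo:
  fixes S :: "complex set"
  assumes oS: "open S" and cS: "connected S" and RS: "-cball 0 R \<subseteq> S" and R: "R > 0"
    and rS: "ball 0 r \<inter> S = {}" and r: "r > 0" and cc: "connected (-S)"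
  shows "S homeomorphic (-{0::complex})"
proof -
  have X: "connected (-S - {0})"
    by (rule puncture_connected[of "-S" r]) (use assms in auto)
  have S0: "0 \<notin> S" using rS r by (metis centre_in_ball disjoint_iff)
  have invS: "inverse ` S = -{0} \<inter> inverse -` S"
  proof
    show "inverse ` S \<subseteq> -{0} \<inter> inverse -` S" using S0 by auto
    show "-{0} \<inter> inverse -` S \<subseteq> inverse ` S"
    proof
      fix z :: complex assume "z \<in> -{0} \<inter> inverse -` S"
      then have "inverse z \<in> S" "z = inverse (inverse z)" by auto
      then show "z \<in> inverse ` S" by blast
    qed
  qed
  have ci: "continuous_on (-{0}) (inverse :: complex \<Rightarrow> complex)"
    by (intro continuous_intros) auto
  have oiS: "open (inverse ` S)"
    using ci oS invS continuous_on_open_vimage[of "-{0::complex}" inverse] by (simp add: Int_commute open_Compl)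
  define T where "T = inverse ` S \<union> ball 0 (1/R)"
  have oT: "open T" unfolding T_def using oiS by auto
  have ciS: "continuous_on S (inverse :: complex \<Rightarrow> complex)"
    using ci S0 continuous_on_subset by blast
  have inball: "inverse z \<in> S" if "z \<in> ball 0 (1/R)" "z \<noteq> 0" for z
  proof -
    have "norm z < 1/R" using that by simp
    then have "norm (inverse z) > R" using that R
      by (simp add: norm_inverse norm_divide field_simps)
    then show ?thesis using RS by auto
  qed
  have cT: "connected T"
    unfolding T_def
  proof (rule connected_Un)
    show "connected (inverse ` S)" using connected_continuous_image[OF ciS cS] .
    show "connected (ball (0::complex) (1/R))" by simp
    have "complex_of_real (1/(2*R)) \<in> ball 0 (1/R)" "complex_of_real (1/(2*R)) \<noteq> 0" using R by (auto simp: norm_divide field_simps)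
    then have "inverse (complex_of_real (1/(2*R))) \<in> S"
      using inball by blast
    then have "complex_of_real (1/(2*R)) \<in> inverse ` S"
      using invS \<open>complex_of_real (1/(2*R)) \<noteq> 0\<close> by blast
    then show "inverse ` S \<inter> ball 0 (1 / R) \<noteq> {}"
      using \<open>complex_of_real (1/(2*R)) \<in> ball 0 (1/R)\<close> by blast
  qed
  have bT: "bounded T"
  proof -
    have "inverse ` S \<subseteq> cball 0 (1/r)"
    proof
      fix z assume "z \<in> inverse ` S"
      then obtain w where w: "w \<in> S" "z = inverse w" by blast
      have "norm w \<ge> r" using w rS by (metis disjoint_iff mem_ball_0 not_le)
      have "norm w > 0" using \<open>norm w \<ge> r\<close> r by linarith
      have "0 < norm w * r" using \<open>norm w > 0\<close> r by (rule mult_pos_pos)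
      have "norm z = 1 / norm w" using w by (simp add: norm_inverse divide_inverse)
      also have "1 / norm w \<le> 1 / r" using divide_left_mono[OF \<open>norm w \<ge> r\<close> _ \<open>0 < norm w * r\<close>, of 1] by simp
      finally show "z \<in> cball 0 (1/r)" by simp
    qed
    then show ?thesis unfolding T_def by (meson bounded_Un bounded_ball bounded_cball bounded_subset)
  qed
  have T0: "0 \<in> T" unfolding T_def using R by simp
  have Tc: "-T = inverse ` (-S - {0})"
  proof
    show "-T \<subseteq> inverse ` (-S - {0})"
    proof
      fix z assume z: "z \<in> -T"
      have z0: "z \<noteq> 0" using z T0 by blast
      have ni: "inverse z \<notin> S"
      proof
        assume "inverse z \<in> S"
        then have "z \<in> inverse ` S" by (metis image_eqI inverse_inverse_eq)
        then show False using z unfolding T_def by blast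
      qed
      have "inverse z \<in> -S - {0}" using ni z0 by simp
      then show "z \<in> inverse ` (-S - {0})"
        by (metis image_eqI inverse_inverse_eq)
    qed
    show "inverse ` (-S - {0}) \<subseteq> -T"
    proof
      fix z assume "z \<in> inverse ` (-S - {0})"
      then obtain w where w: "w \<notin> S" "w \<noteq> 0" "z = inverse w" by blast
      have zn: "z \<notin> inverse ` S"
      proof
        assume "z \<in> inverse ` S"
        then obtain s where s: "s \<in> S" "z = inverse s" by blast
        then have "w = s" using w(3) by simp
        then show False using s w by blast
      qed
      have "w \<in> cball 0 R" using w(1) RS by blast
      then have "norm w \<le> R" by simp
      have "norm w > 0" using w by simp
      have "0 < R * norm w" using R \<open>norm w > 0\<close> by (rule mult_pos_pos)
      have "1/R \<le> 1 / norm w" using divide_left_mono[OF \<open>norm w \<le> R\<close> _ \<open>0 < R * norm w\<close>, of 1] by simp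
      also have "1 / norm w = norm z" using w by (simp add: norm_inverse divide_inverse)
      finally have "norm z \<ge> 1/R" .
      then have "z \<notin> ball 0 (1/R)" by simp
      then show "z \<in> -T" using zn unfolding T_def by blast
    qed
  qed
  have ccT: "connected (-T)"
  proof -
    have "continuous_on (-S - {0}) (inverse :: complex \<Rightarrow> complex)"
      using ci by (rule continuous_on_subset) auto
    then show ?thesis using Tc connected_continuous_image[OF _ X] by simp
  qed
  have TS: "T - {0} = inverse ` S"
    using inball S0 invS unfolding T_def by auto
  have h1: "inverse ` S homeomorphic (-{0::complex})"
    using punctured_disc_homeo[OF oT bT cT T0 ccT] TS by simp
  have "homeomorphism S (inverse ` S) inverse inverse"
  proof (rule homeomorphismI)
    show "continuous_on S inverse" by (rule ciS)
    show "continuous_on (inverse ` S) (inverse :: complex \<Rightarrow> complex)"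
      by (rule continuous_on_subset[OF ci]) (use invS in auto)
  qed auto
  then have "S homeomorphic inverse ` S" unfolding homeomorphic_def by blast
  then show ?thesis using h1 homeomorphic_trans by blast
qed



lemma ccs_image_sub:
  assumes k: "continuous_on UNIV k" and kS: "k ` S \<subseteq> S" and kx: "k x \<in> connected_component_set S x"
  shows "k ` connected_component_set S x \<subseteq> connected_component_set S x"
proof -
  have c: "connected (k ` connected_component_set S x)"
    by (rule connected_continuous_image[OF continuous_on_subset[OF k]]) auto
  have s: "k ` connected_component_set S x \<subseteq> S"
    using kS connected_component_subset by blast
  have "x \<in> connected_component_set S x" using kx connected_component_in by fastforce
  then have "k x \<in> k ` connected_component_set S x" by blast
  then have "k ` connected_component_set S x \<subseteq> connected_component_set S (k x)"
    using connected_component_maximal[OF _ c s] by blast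
  then show ?thesis using connected_component_eq[OF kx] by simp
qed

lemma ccs_invariant:
  assumes h: "homeomorphism UNIV UNIV h h'" and hS: "h ` S = S"
    and hx: "h x \<in> connected_component_set S x" and hx': "h' x \<in> connected_component_set S x"
  shows "h ` connected_component_set S x = connected_component_set S x"
proof -
  have ch: "continuous_on UNIV h" and ch': "continuous_on UNIV h'"
    and i1: "\<And>y. h' (h y) = y" and i2: "\<And>y. h (h' y) = y"
    using h unfolding homeomorphism_def by auto
  have "h' ` S = h' ` (h ` S)" using hS by simp
  also have "\<dots> = S" using i1 by (simp add: image_image)
  finally have h'S: "h' ` S = S" .
  have a: "h ` connected_component_set S x \<subseteq> connected_component_set S x"
    by (rule ccs_image_sub[OF ch _ hx]) (use hS in auto)
  have b: "h' ` connected_component_set S x \<subseteq> connected_component_set S x"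
    by (rule ccs_image_sub[OF ch' _ hx']) (use h'S in auto)
  have "connected_component_set S x = h ` h' ` connected_component_set S x"
    using i2 by (simp add: image_comp comp_def)
  also have "\<dots> \<subseteq> h ` connected_component_set S x" using b by blast
  finally show ?thesis using a by blast
qed

lemma closure_invariant:
  assumes h: "homeomorphism UNIV UNIV h h'" and hS: "h ` S = S"
  shows "h ` closure S = closure S"
proof -
  have ch: "continuous_on UNIV h" and ch': "continuous_on UNIV h'"
    and i1: "\<And>y. h' (h y) = y" and i2: "\<And>y. h (h' y) = y"
    using h unfolding homeomorphism_def by auto
  have "h' ` S = h' ` (h ` S)" using hS by simp
  also have "\<dots> = S" using i1 by (simp add: image_image)
  finally have h'S: "h' ` S = S" .
  have a: "h ` closure S \<subseteq> closure S"
    by (rule image_closure_subset[OF continuous_on_subset[OF ch]]) (use hS closure_subset in auto)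
  have b: "h' ` closure S \<subseteq> closure S"
    by (rule image_closure_subset[OF continuous_on_subset[OF ch']]) (use h'S closure_subset in auto)
  have "closure S = h ` h' ` closure S"
    using i2 by (simp add: image_comp comp_def)
  also have "\<dots> \<subseteq> h ` closure S" using b by blast
  finally show ?thesis using a by blast
qed

lemma funpow_inv:
  fixes F G :: "'a \<Rightarrow> 'a"
  assumes "\<And>z. G (F z) = z"
  shows "(G^^n) ((F^^n) z) = z"
proof (induction n arbitrary: z)
  case 0 then show ?case by simp
next
  case (Suc n)
  have e1: "(G^^Suc n) w = (G^^n) (G w)" for w by (simp add: funpow_Suc_right del: funpow.simps)
  have e2: "(F^^Suc n) z = F ((F^^n) z)" by simp
  have "(G^^Suc n) ((F^^Suc n) z) = (G^^n) (G (F ((F^^n) z)))"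
    by (simp only: e1 e2)
  also have "\<dots> = z" using assms Suc.IH by simp
  finally show ?case .
qed

lemma funpow_cont:
  fixes F :: "'a::topological_space \<Rightarrow> 'a"
  assumes "continuous_on UNIV F"
  shows "continuous_on UNIV (F^^n)"
proof (induction n)
  case 0 then show ?case by (simp add: continuous_on_id id_def)
next
  case (Suc n)
  then show ?case
    by (simp only: funpow.simps) (rule continuous_on_compose[OF Suc], rule continuous_on_subset[OF assms], auto)
qed

lemma orbit_union_inv:
  assumes "\<And>z. G (F z) = z" "\<And>z. F (G z) = z"
  shows "F ` ((\<Union>n. (G^^n) ` U) \<union> (\<Union>n. (F^^n) ` U)) \<subseteq> (\<Union>n. (G^^n) ` U) \<union> (\<Union>n. (F^^n) ` U)"
proof
  fix y assume "y \<in> F ` ((\<Union>n. (G^^n) ` U) \<union> (\<Union>n. (F^^n) ` U))"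
  then obtain x where y: "y = F x" and x: "x \<in> (\<Union>n. (G^^n) ` U) \<union> (\<Union>n. (F^^n) ` U)" by blast
  from x show "y \<in> (\<Union>n. (G^^n) ` U) \<union> (\<Union>n. (F^^n) ` U)"
  proof
    assume "x \<in> (\<Union>n. (G^^n) ` U)"
    then obtain n u where u: "u \<in> U" "x = (G^^n) u" by blast
    show ?thesis
    proof (cases n)
      case 0
      then have "y = (F^^1) u" using u y by simp
      then show ?thesis using u by blast
    next
      case (Suc m)
      then have "y = (G^^m) u" using u y assms(2) by simp
      then show ?thesis using u by blast
    qed
  next
    assume "x \<in> (\<Union>n. (F^^n) ` U)"
    then obtain n u where u: "u \<in> U" "x = (F^^n) u" by blast
    then have "y = (F^^Suc n) u" using y by simp
    then show ?thesis using u by blast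
  qed
qed



lemma planar_main:
  fixes F G :: "complex \<Rightarrow> complex" and B :: real
  assumes hom: "homeomorphism UNIV UNIV F G" and F0: "F 0 = 0"
    and bF: "\<And>n z. exp (-B) * norm z \<le> norm ((F^^n) z)"
    and bG: "\<And>n z. exp (-B) * norm z \<le> norm ((G^^n) z)"
  obtains Vs W0 b where "b > 0" "open Vs" "open W0" "connected Vs" "connected W0" "Vs \<inter> W0 = {}"
     "-cball 0 1 \<subseteq> Vs" "ball 0 b \<subseteq> W0"
     "Vs homeomorphic (-{0::complex})" "(W0 - {0}) homeomorphic (-{0::complex})"
     "F ` Vs = Vs" "F ` W0 = W0" "G ` Vs = Vs" "G ` W0 = W0"
     "connected (-(Vs \<union> W0))" "-(Vs \<union> W0) \<noteq> {}"
     "\<And>Q P1 P2. open P1 \<Longrightarrow> open P2 \<Longrightarrow> connected P1 \<Longrightarrow> connected P2 \<Longrightarrow> P1 \<inter> P2 = {} \<Longrightarrow>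
        -{0} - Q = P1 \<union> P2 \<Longrightarrow> Q \<inter> (Vs \<union> W0) = {} \<Longrightarrow> P1 \<inter> -cball 0 1 \<noteq> {} \<Longrightarrow>
        P2 \<inter> (ball 0 b - {0}) \<noteq> {} \<Longrightarrow> -(Vs \<union> W0) \<subseteq> Q"
proof -
  have cF: "continuous_on UNIV F" using hom by (rule homeomorphism_cont1)
  have cG: "continuous_on UNIV G" using hom by (rule homeomorphism_cont2)
  have GF: "\<And>z. G (F z) = z" using homeomorphism_apply1[OF hom] by blast
  have FG: "\<And>z. F (G z) = z" using homeomorphism_apply2[OF hom] by blast
  have G0: "G 0 = 0" using GF[of 0] F0 by simp
  define b where "b = exp (-B)"
  define E where "E = exp B"
  have b0: "b > 0" and E0: "E > 0" and bE: "b * E = 1"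
    unfolding b_def E_def by (auto simp: exp_minus field_simps)
  define Up where "Up = - cball (0::complex) 1"
  have oUp: "open Up" and cUp: "connected Up" unfolding Up_def
    by (auto intro!: connected_complement_bounded_convex)
  define V where "V = (\<Union>n. (G^^n) ` Up) \<union> (\<Union>n. (F^^n) ` Up)"
  define p0 where "p0 = complex_of_real (E + 1)"
  have np0: "norm p0 = E + 1" using E0 by (simp add: p0_def)
  have big: "norm ((F^^n) q) > 1" "norm ((G^^n) q) > 1" if "norm q \<ge> E + 1" for q n
  proof -
    have "1 < b * (E + 1)" using bE b0 by (simp add: algebra_simps)
    also have "\<dots> \<le> b * norm q" using that b0 by simp
    finally show "norm ((F^^n) q) > 1" "norm ((G^^n) q) > 1"
      using bF[where n=n and z=q] bG[where n=n and z=q] unfolding b_def by linarith+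
  qed
  have imG: "(G^^n) ` Up = (F^^n) -` Up" for n
  proof
    show "(G^^n) ` Up \<subseteq> (F^^n) -` Up" using funpow_inv[of F G n] FG by auto
    show "(F^^n) -` Up \<subseteq> (G^^n) ` Up"
    proof
      fix x assume "x \<in> (F^^n) -` Up"
      then show "x \<in> (G^^n) ` Up" using funpow_inv[of G F n x] GF by (metis image_eqI vimageD)
    qed
  qed
  have imF: "(F^^n) ` Up = (G^^n) -` Up" for n
  proof
    show "(F^^n) ` Up \<subseteq> (G^^n) -` Up" using funpow_inv[of G F n] GF by auto
    show "(G^^n) -` Up \<subseteq> (F^^n) ` Up"
    proof
      fix x assume "x \<in> (G^^n) -` Up"
      then show "x \<in> (F^^n) ` Up" using funpow_inv[of F G n x] FG by (metis image_eqI vimageD)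
    qed
  qed
  have oV: "open V"
  proof -
    have "open ((F^^n) -` Up)" "open ((G^^n) -` Up)" for n
      using continuous_on_open_vimage[of UNIV "F^^n"] continuous_on_open_vimage[of UNIV "G^^n"]
        funpow_cont[OF cF, of n] funpow_cont[OF cG, of n] oUp by auto
    then show ?thesis unfolding V_def imG imF by auto
  qed
  have UpV: "Up \<subseteq> V"
  proof
    fix x assume "x \<in> Up"
    then have "x \<in> (F^^0) ` Up" by simp
    then show "x \<in> V" unfolding V_def by blast
  qed
  have p0V: "p0 \<in> Up" using np0 E0 unfolding Up_def by simp
  have cV: "connected V"
  proof -
    let ?A = "range (\<lambda>n. (G^^n) ` Up) \<union> range (\<lambda>n. (F^^n) ` Up)"
    have VA: "V = \<Union>?A" unfolding V_def by auto
    have cA: "connected S" if "S \<in> ?A" for S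
      using that connected_continuous_image[OF continuous_on_subset[OF funpow_cont[OF cG]] cUp]
        connected_continuous_image[OF continuous_on_subset[OF funpow_cont[OF cF]] cUp] by auto
    have "p0 \<in> \<Inter>?A"
    proof -
      have i: "(F^^n) p0 \<in> Up" "(G^^n) p0 \<in> Up" for n
        using big[of p0 n] np0 unfolding Up_def by auto
      have "p0 \<in> (G^^n) ` Up" "p0 \<in> (F^^n) ` Up" for n
        using imG[of n] imF[of n] i[of n] by blast+
      then show ?thesis by auto
    qed
    then have ne: "\<Inter>?A \<noteq> {}" by blast
    show ?thesis using connected_Union[of ?A, OF cA ne] VA by simp
  qed
  have Vb: "norm z > b" if "z \<in> V" for z
  proof -
    from that obtain n u where "u \<in> Up" and "z = (G^^n) u \<or> z = (F^^n) u" unfolding V_def by blast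
    then have "norm u > 1" and "b * norm u \<le> norm z" using bF[where n=n and z=u] bG[where n=n and z=u] unfolding Up_def b_def by auto
    moreover have "b < b * norm u" using b0 \<open>norm u > 1\<close> by simp
    ultimately show ?thesis by linarith
  qed
  have FV: "F ` V = V"
  proof -
    have a: "F ` V \<subseteq> V" unfolding V_def by (rule orbit_union_inv[OF GF FG])
    have "G ` V \<subseteq> V"
      using orbit_union_inv[OF FG GF, of Up] unfolding V_def by (simp add: Un_commute)
    have "V \<subseteq> F ` V"
    proof
      fix x assume "x \<in> V"
      then have "G x \<in> V" using \<open>G ` V \<subseteq> V\<close> by blast
      then show "x \<in> F ` V" using image_eqI[of x F "G x"] FG[of x] by simp
    qed
    then show ?thesis using a by blast
  qed
  define K where "K = closure V"
  have cK: "closed K" "connected K" unfolding K_def using cV connected_imp_connected_closure by auto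
  have FK: "F ` K = K" unfolding K_def by (rule closure_invariant[OF hom FV])
  have Kb: "K \<subseteq> -ball 0 b" unfolding K_def
  proof (rule closure_minimal)
    show "V \<subseteq> -ball 0 b"
    proof
      fix x assume "x \<in> V"
      then have "b < norm x" by (rule Vb)
      then show "x \<in> -ball 0 b" by simp
    qed
  qed (simp add: closed_Compl)
  have K0: "0 \<notin> K" using Kb b0 by auto
  have bijF: "bij F" by (rule o_bij[of G]) (use GF FG in auto)
  define W0 where "W0 = connected_component_set (-K) 0"
  have W0in: "W0 \<in> components (-K)" unfolding W0_def components_iff using Kb b0 by auto
  have oW0: "open W0" unfolding W0_def using cK by (simp add: open_connected_component open_Compl)
  have cW0: "connected W0" unfolding W0_def by simp
  have bW0: "ball 0 b \<subseteq> W0" unfolding W0_def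
    by (rule connected_component_maximal) (use Kb b0 in auto)
  have W0K: "W0 \<subseteq> -K" unfolding W0_def by (rule connected_component_subset)
  have W0c: "W0 \<subseteq> cball 0 1" using W0K UpV unfolding K_def Up_def using closure_subset by fastforce
  have FW0: "F ` W0 = W0" unfolding W0_def
  proof (rule ccs_invariant[OF hom])
    show "F ` (-K) = -K" using FK bijF by (simp add: bij_image_Compl_eq)
  qed (use K0 F0 G0 in \<open>auto simp: connected_component_refl\<close>)
  have ccW0: "connected (-W0)" by (rule component_complement_connected[OF cK(2) W0in])
  have h1: "(W0 - {0}) homeomorphic (-{0::complex})"
  proof (rule punctured_disc_homeo[OF oW0])
    show "bounded W0" using W0c bounded_cball bounded_subset by blast
  qed (use cW0 bW0 b0 ccW0 in auto)
  define K2 where "K2 = closure W0"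
  have cK2: "closed K2" "connected K2" unfolding K2_def using cW0 connected_imp_connected_closure by auto
  have FK2: "F ` K2 = K2" unfolding K2_def by (rule closure_invariant[OF hom FW0])
  have K2c: "K2 \<subseteq> cball 0 1" unfolding K2_def by (rule closure_minimal[OF W0c]) simp
  define Vs where "Vs = connected_component_set (-K2) p0"
  have Vsin: "Vs \<in> components (-K2)" unfolding Vs_def components_iff using K2c p0V Up_def by auto
  have oVs: "open Vs" unfolding Vs_def using cK2 by (simp add: open_connected_component open_Compl)
  have cVs: "connected Vs" unfolding Vs_def by simp
  have UpVs: "Up \<subseteq> Vs" unfolding Vs_def
    by (rule connected_component_maximal[OF p0V cUp]) (use K2c Up_def in auto)
  have VsK2: "Vs \<subseteq> -K2" unfolding Vs_def by (rule connected_component_subset)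
  have FVs: "F ` Vs = Vs" unfolding Vs_def
  proof (rule ccs_invariant[OF hom])
    show "F ` (-K2) = -K2" using FK2 bijF by (simp add: bij_image_Compl_eq)
    have "F p0 \<in> Up" "G p0 \<in> Up" using big[of p0 1] np0 unfolding Up_def by auto
    then show "F p0 \<in> connected_component_set (- K2) p0" "G p0 \<in> connected_component_set (- K2) p0"
      using UpVs unfolding Vs_def by auto
  qed
  have "G ` Vs = G ` (F ` Vs)" using FVs by simp
  also have "\<dots> = Vs" using GF by (simp add: image_image)
  finally have GVs: "G ` Vs = Vs" .
  have "G ` W0 = G ` (F ` W0)" using FW0 by simp
  also have "\<dots> = W0" using GF by (simp add: image_image)
  finally have GW0: "G ` W0 = W0" .
  have disj: "Vs \<inter> W0 = {}" using VsK2 closure_subset unfolding K2_def by blast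
  have bVs: "ball 0 b \<inter> Vs = {}" using disj bW0 by blast
  have ccVs: "connected (-Vs)" by (rule component_complement_connected[OF cK2(2) Vsin])
  have h2: "Vs homeomorphic (-{0::complex})"
    by (rule outer_homeo[OF oVs cVs _ _ bVs b0 ccVs, of 1]) (use UpVs Up_def in auto)
  have cC: "connected (-(Vs \<union> W0))"
  proof -
    have "connected ((-Vs) \<inter> (-W0))"
    proof (rule unicoherentD[OF unicoherent_UNIV])
      show "connected (-Vs)" "connected (-W0)" by (fact ccVs, fact ccW0)
      show "UNIV = -Vs \<union> -W0" using disj by auto
      show "closedin (top_of_set UNIV) (-Vs)" "closedin (top_of_set UNIV) (-W0)"
        using oVs oW0 by (auto simp: closed_Compl)
    qed
    then show ?thesis by (simp add: Compl_Un)
  qed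
  have neC: "-(Vs \<union> W0) \<noteq> {}"
  proof
    assume e: "-(Vs \<union> W0) = {}"
    have "connected (UNIV :: complex set)" by (simp add: convex_connected)
    then have "Vs \<inter> UNIV = {} \<or> W0 \<inter> UNIV = {}"
      using connectedD[OF _ oVs oW0] disj e by blast
    then show False using UpVs bW0 b0 p0V by auto
  qed
  have VVs: "V \<subseteq> Vs"
  proof -
    have "V \<inter> W0 = {}" using W0K closure_subset unfolding K_def by blast
    then have "V \<inter> K2 = {}" unfolding K2_def using open_Int_closure_eq_empty[OF oV] by blast
    then show ?thesis unfolding Vs_def using UpV p0V
      by (intro connected_component_maximal[OF _ cV]) auto
  qed
  have mini: "-(Vs \<union> W0) \<subseteq> Q"
    if P: "open P1" "open P2" "connected P1" "connected P2" "P1 \<inter> P2 = {}"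
      "-{0} - Q = P1 \<union> P2" "Q \<inter> (Vs \<union> W0) = {}" "P1 \<inter> -cball 0 1 \<noteq> {}"
      "P2 \<inter> (ball 0 b - {0}) \<noteq> {}" for Q P1 P2
  proof
    obtain z1 where z1: "z1 \<in> P1" "z1 \<in> Up" using P(8) Up_def by auto
    obtain z2 where z2: "z2 \<in> P2" "z2 \<in> ball 0 b" "z2 \<noteq> 0" using P(9) by blast
    have 0: "0 \<in> W0" using bW0 b0 by auto
    have VsP1: "Vs \<subseteq> P1"
    proof -
      have "Vs \<subseteq> P1 \<union> P2" using P(6,7) 0 disj by auto
      then have "P1 \<inter> Vs = {} \<or> P2 \<inter> Vs = {}"
        using connectedD[OF cVs P(1,2)] P(5) by blast
      moreover have "P1 \<inter> Vs \<noteq> {}" using z1 UpVs by auto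
      ultimately show ?thesis using \<open>Vs \<subseteq> P1 \<union> P2\<close> by blast
    qed
    have W0P2: "W0 - {0} \<subseteq> P2"
    proof -
      have cW: "connected (W0 - {0})" by (rule connected_open_delete[OF oW0 cW0]) simp
      have oW: "open (W0 - {0})" using oW0 by auto
      have "W0 - {0} \<subseteq> P1 \<union> P2" using P(6,7) by auto
      then have "P1 \<inter> (W0 - {0}) = {} \<or> P2 \<inter> (W0 - {0}) = {}"
        using connectedD[OF cW P(1,2)] P(5) by blast
      moreover have "P2 \<inter> (W0 - {0}) \<noteq> {}" using z2 bW0 by auto
      ultimately show ?thesis using \<open>W0 - {0} \<subseteq> P1 \<union> P2\<close> by blast
    qed
    fix x assume x: "x \<in> -(Vs \<union> W0)"
    show "x \<in> Q"
    proof (rule ccontr)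
      assume xQ: "x \<notin> Q"
      have "x \<noteq> 0" using x 0 by auto
      then have "x \<in> P1 \<or> x \<in> P2" using P(6) xQ by auto
      then show False
      proof
        assume xP: "x \<in> P1"
        have "0 \<notin> P1" using P(6) by auto
        then have "P1 \<inter> W0 = {}" using W0P2 P(5) by blast
        then have "P1 \<inter> K2 = {}" unfolding K2_def using open_Int_closure_eq_empty[OF P(1)] by blast
        then have "P1 \<subseteq> connected_component_set (-K2) z1"
          by (intro connected_component_maximal[OF z1(1) P(3)]) auto
        also have "\<dots> = Vs" unfolding Vs_def
          by (rule connected_component_eq) (use z1 UpVs Vs_def in auto)
        finally show False using xP x by auto
      next
        assume xP: "x \<in> P2"
        have "P2 \<inter> V = {}" using VsP1 VVs P(5) by blast
        then have "P2 \<inter> K = {}" unfolding K_def using open_Int_closure_eq_empty[OF P(2)] by blast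
        then have "P2 \<subseteq> connected_component_set (-K) z2"
          by (intro connected_component_maximal[OF z2(1) P(4)]) auto
        also have "\<dots> = W0" unfolding W0_def
          by (rule connected_component_eq) (use z2 bW0 W0_def in auto)
        finally show False using xP x by auto
      qed
    qed
  qed
  have UpVs': "-cball 0 1 \<subseteq> Vs" using UpVs unfolding Up_def .
  show thesis
    by (rule that[OF b0 oVs oW0 cVs cW0 disj UpVs' bW0 h2 h1 FVs FW0 GVs GW0 cC neC mini])
qed



definition conjm :: "(complex \<times> real \<Rightarrow> complex \<times> real) \<Rightarrow> complex \<Rightarrow> complex" where
  "conjm f z = (if z = 0 then 0 else psi (f (psinv z)))"

lemma conjm_psi: "a \<in> annulus \<Longrightarrow> conjm f (psi a) = psi (f a)"
  by (simp add: conjm_def psi_nz psinv_psi)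

lemma funpow_annulus:
  assumes "f ` annulus \<subseteq> annulus" "a \<in> annulus"
  shows "(f^^n) a \<in> annulus"
  by (induction n) (use assms in auto)

lemma conjm_iter:
  assumes fA: "f ` annulus \<subseteq> annulus" and z: "z \<noteq> 0"
  shows "(conjm f ^^ n) z = psi ((f^^n) (psinv z))"
proof (induction n)
  case 0 then show ?case using z by (simp add: psi_psinv)
next
  case (Suc n)
  have "(f^^n) (psinv z) \<in> annulus" by (rule funpow_annulus[OF fA psinv_in[OF z]])
  then show ?case using Suc by (simp add: conjm_psi)
qed

lemma conjm_bound:
  assumes fA: "f ` annulus \<subseteq> annulus"
    and bd: "\<forall>a\<in>annulus. \<bar>snd ((f^^n) a) - snd a\<bar> \<le> B"
  shows "exp (-B) * norm z \<le> norm ((conjm f ^^ n) z)"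
    and "norm ((conjm f ^^ n) z) \<le> exp B * norm z"
proof -
  have "exp (-B) * norm z \<le> norm ((conjm f ^^ n) z) \<and> norm ((conjm f ^^ n) z) \<le> exp B * norm z"
  proof (cases "z = 0")
    case True
    have "(conjm f ^^ n) 0 = 0" by (induction n) (auto simp: conjm_def)
    then show ?thesis using True by simp
  next
    case False
    let ?a = "psinv z"
    have a: "?a \<in> annulus" by (rule psinv_in[OF False])
    have fa: "(f^^n) ?a \<in> annulus" by (rule funpow_annulus[OF fA a])
    have e: "norm ((conjm f ^^ n) z) = exp (snd ((f^^n) ?a))"
      using conjm_iter[OF fA False] norm_psi[OF fa] by simp
    have s: "snd ?a = ln (norm z)" by (simp add: snd_psinv)
    have d: "\<bar>snd ((f^^n) ?a) - ln (norm z)\<bar> \<le> B" using bd a s by auto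
    have nz: "norm z > 0" using False by simp
    have "exp (-B) * norm z = exp (ln (norm z) - B)" using nz by (simp add: exp_diff exp_minus field_simps)
    also have "\<dots> \<le> exp (snd ((f^^n) ?a))" using d by simp
    finally have 1: "exp (-B) * norm z \<le> norm ((conjm f ^^ n) z)" using e by simp
    have "exp (snd ((f^^n) ?a)) \<le> exp (ln (norm z) + B)" using d by simp
    also have "\<dots> = exp B * norm z" using nz by (simp add: exp_add)
    finally have 2: "norm ((conjm f ^^ n) z) \<le> exp B * norm z" using e by simp
    show ?thesis using 1 2 by simp
  qed
  then show "exp (-B) * norm z \<le> norm ((conjm f ^^ n) z)"
    and "norm ((conjm f ^^ n) z) \<le> exp B * norm z" by auto
qed

lemma conjm_cont:
  assumes fA: "f ` annulus \<subseteq> annulus" and cf: "continuous_on annulus f"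
    and bd: "\<forall>a\<in>annulus. \<bar>snd ((f^^1) a) - snd a\<bar> \<le> B"
  shows "continuous_on UNIV (conjm f)"
proof -
  have c0: "continuous_on (-{0}) (\<lambda>z. f (psinv z))"
    by (rule continuous_on_compose2[OF cf cont_psinv]) (use psinv_in in blast)
  have c1: "continuous_on (-{0}) (\<lambda>z. psi (f (psinv z)))"
    by (rule continuous_on_compose2[OF cont_psi c0, of UNIV]) simp
  have c2: "continuous_on (-{0}) (conjm f)"
    using c1 by (rule continuous_on_cong[THEN iffD1, rotated 2]) (auto simp: conjm_def)
  have "isCont (conjm f) z" for z
  proof (cases "z = 0")
    case False
    then show ?thesis using c2 continuous_on_eq_continuous_at[of "-{0}" "conjm f"] by (auto simp: open_Compl)
  next
    case True
    have b: "norm (conjm f w) \<le> exp B * norm w" for w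
      using conjm_bound(2)[OF fA bd, of w] by simp
    have "\<forall>e>0. \<exists>d>0. \<forall>x'. dist x' 0 < d \<longrightarrow> dist (conjm f x') (conjm f 0) < e"
    proof (intro allI impI)
      fix e :: real assume e: "e > 0"
      show "\<exists>d>0. \<forall>x'. dist x' 0 < d \<longrightarrow> dist (conjm f x') (conjm f 0) < e"
      proof (intro exI conjI allI impI)
        show "e / exp B > 0" using e by simp
        fix x' :: complex assume "dist x' 0 < e / exp B"
        then have "exp B * norm x' < e" by (simp add: field_simps)
        then show "dist (conjm f x') (conjm f 0) < e" using b[of x'] by (simp add: conjm_def)
      qed
    qed
    then show ?thesis using True continuous_at_eps_delta by blast
  qed
  then show ?thesis by (simp add: continuous_at_imp_continuous_on)
qed



lemma pre_eq: "P \<subseteq> -{0} \<Longrightarrow> {a \<in> annulus. psi a \<in> P} = psinv ` P"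
proof
  assume P: "P \<subseteq> -{0}"
  show "{a \<in> annulus. psi a \<in> P} \<subseteq> psinv ` P"
  proof
    fix a assume "a \<in> {a \<in> annulus. psi a \<in> P}"
    then have "a = psinv (psi a)" "psi a \<in> P" using psinv_psi by auto
    then show "a \<in> psinv ` P" by blast
  qed
  show "psinv ` P \<subseteq> {a \<in> annulus. psi a \<in> P}"
  proof
    fix a assume "a \<in> psinv ` P"
    then obtain z where z: "z \<in> P" "a = psinv z" by blast
    then have "z \<noteq> 0" using P by auto
    then show "a \<in> {a \<in> annulus. psi a \<in> P}" using z psinv_in psi_psinv by auto
  qed
qed

lemma psi_pre: "P \<subseteq> -{0} \<Longrightarrow> psi ` {a \<in> annulus. psi a \<in> P} = P"
proof -
  assume P: "P \<subseteq> -{0}"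
  have "psi ` {a \<in> annulus. psi a \<in> P} = psi ` psinv ` P" using pre_eq[OF P] by simp
  also have "\<dots> = P"
  proof -
    have "\<forall>z\<in>P. psi (psinv z) = z" using P psi_psinv by (metis ComplD insertI1 subsetD)
    then show ?thesis by (simp add: image_image)
  qed
  finally show ?thesis .
qed

lemma pre_homeo:
  assumes P: "P \<subseteq> -{0}" and h: "P homeomorphic (-{0::complex})"
  shows "{a \<in> annulus. psi a \<in> P} homeomorphic annulus"
proof -
  have "homeomorphism {a \<in> annulus. psi a \<in> P} P psi psinv"
    by (rule homeomorphism_of_subsets[OF homeo_psi]) (use P psi_pre[OF P] in auto)
  then have "{a \<in> annulus. psi a \<in> P} homeomorphic P" unfolding homeomorphic_def by blast
  also have "P homeomorphic annulus" using h annulus_homeomorphic homeomorphic_sym homeomorphic_trans by blast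
  finally show ?thesis .
qed

lemma pre_openin:
  assumes "open P"
  shows "openin (top_of_set annulus) {a \<in> annulus. psi a \<in> P}"
proof -
  have "{a \<in> annulus. psi a \<in> P} = annulus \<inter> psi -` P" by auto
  then show ?thesis using continuous_openin_preimage_gen[OF cont_psi assms] by simp
qed

lemma norm_circ: "norm (circlepath 0 \<rho> t) = \<bar>\<rho>\<bar>"
  by (simp add: circlepath norm_mult)

lemma pre_essential:
  assumes sp: "sphere 0 \<rho> \<subseteq> P" and r: "\<rho> > 0" and P: "P \<subseteq> -{0}"
  shows "essential_in_annulus {a \<in> annulus. psi a \<in> P}"
proof -
  define p where "p = psinv \<circ> circlepath 0 \<rho>"
  have cnz: "circlepath 0 \<rho> t \<noteq> 0" for t using norm_circ[of \<rho> t] r by auto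
  have pp: "path p" unfolding p_def
    by (rule path_continuous_image[OF path_circlepath continuous_on_subset[OF cont_psinv]]) (use r in auto)
  have pl: "pathfinish p = pathstart p" unfolding p_def pathstart_compose pathfinish_compose by simp
  have pim: "path_image p \<subseteq> {a \<in> annulus. psi a \<in> P}"
  proof
    fix a assume "a \<in> path_image p"
    then obtain z where z: "z \<in> sphere 0 \<rho>" "a = psinv z"
      unfolding p_def path_image_compose using r by auto
    then have "z \<noteq> 0" using r by auto
    then show "a \<in> {a \<in> annulus. psi a \<in> P}" using z sp psinv_in psi_psinv by auto
  qed
  have nh: "\<not> homotopic_loops annulus p (linepath (pathstart p) (pathstart p))"
  proof
    assume H: "homotopic_loops annulus p (linepath (pathstart p) (pathstart p))"
    have H2: "homotopic_loops (-{0}) (psi \<circ> p) (psi \<circ> linepath (pathstart p) (pathstart p))"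
      by (rule homotopic_loops_continuous_image[OF H cont_psi]) (use psi_nz in auto)
    have e1: "psi \<circ> p = circlepath 0 \<rho>" unfolding p_def using cnz psi_psinv by (auto simp: fun_eq_iff)
    have st: "pathstart p \<in> annulus" unfolding p_def pathstart_compose using psinv_in cnz
      by (metis pathstart_def)
    let ?c = "psi (pathstart p)"
    have e2: "psi \<circ> linepath (pathstart p) (pathstart p) = linepath ?c ?c"
      by (simp add: linepath_refl comp_def)
    have c0: "?c \<noteq> 0" using psi_nz[OF st] .
    have "winding_number (circlepath 0 \<rho>) 0 = winding_number (linepath ?c ?c) 0"
      using winding_number_homotopic_loops[of 0] H2 e1 e2 by simp
    moreover have "winding_number (circlepath 0 \<rho>) 0 = 1" using winding_number_circlepath_centre[OF r] by simp
    moreover have "winding_number (linepath ?c ?c) 0 = 0" using c0 by simp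
    ultimately show False by simp
  qed
  show ?thesis unfolding essential_in_annulus_def using pp pl pim nh by blast
qed



theorem mainTheorem8:
  fixes k :: int and f g :: "complex \<times> real \<Rightarrow> complex \<times> real"
  assumes "k \<ge> 1"
    and "homeo_dehn_nw k f g"
    and "bounded_diffusion f g"
  shows "\<exists>C. circloid C \<and> f ` C = C"
proof -
  have hf: "homeomorphism annulus annulus f g" using assms(2) unfolding homeo_dehn_nw_def by blast
  obtain B where B: "\<forall>n::nat. \<forall>z\<in>annulus. \<bar>snd ((f ^^ n) z) - snd z\<bar> \<le> B \<and> \<bar>snd ((g ^^ n) z) - snd z\<bar> \<le> B"
    using assms(3) unfolding bounded_diffusion_def by blast
  have fA: "f ` annulus \<subseteq> annulus" using homeomorphism_image1[OF hf] by simp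
  have gA: "g ` annulus \<subseteq> annulus" using homeomorphism_image2[OF hf] by simp
  have cf: "continuous_on annulus f" by (rule homeomorphism_cont1[OF hf])
  have cg: "continuous_on annulus g" by (rule homeomorphism_cont2[OF hf])
  have gf: "\<And>a. a \<in> annulus \<Longrightarrow> g (f a) = a" by (rule homeomorphism_apply1[OF hf])
  have fg: "\<And>a. a \<in> annulus \<Longrightarrow> f (g a) = a" by (rule homeomorphism_apply2[OF hf])
  define F where "F = conjm f"
  define G where "G = conjm g"
  have Bf: "\<forall>a\<in>annulus. \<bar>snd ((f^^n) a) - snd a\<bar> \<le> B" for n using B by blast
  have Bg: "\<forall>a\<in>annulus. \<bar>snd ((g^^n) a) - snd a\<bar> \<le> B" for n using B by blast
  have cF: "continuous_on UNIV F" unfolding F_def by (rule conjm_cont[OF fA cf Bf])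
  have cG: "continuous_on UNIV G" unfolding G_def by (rule conjm_cont[OF gA cg Bg])
  have GF: "G (F z) = z" for z
  proof (cases "z = 0")
    case True then show ?thesis by (simp add: F_def G_def conjm_def)
  next
    case False
    have a: "psinv z \<in> annulus" by (rule psinv_in[OF False])
    then have fa: "f (psinv z) \<in> annulus" using fA by blast
    have "F z = psi (f (psinv z))" using False by (simp add: F_def conjm_def)
    then have "G (F z) = psi (g (f (psinv z)))" unfolding G_def using conjm_psi[OF fa] by simp
    also have "\<dots> = z" using gf[OF a] psi_psinv[OF False] by simp
    finally show ?thesis .
  qed
  have FG: "F (G z) = z" for z
  proof (cases "z = 0")
    case True then show ?thesis by (simp add: F_def G_def conjm_def)
  next
    case False
    have a: "psinv z \<in> annulus" by (rule psinv_in[OF False])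
    then have ga: "g (psinv z) \<in> annulus" using gA by blast
    have "G z = psi (g (psinv z))" using False by (simp add: G_def conjm_def)
    then have "F (G z) = psi (f (g (psinv z)))" unfolding F_def using conjm_psi[OF ga] by simp
    also have "\<dots> = z" using fg[OF a] psi_psinv[OF False] by simp
    finally show ?thesis .
  qed
  have hom: "homeomorphism UNIV UNIV F G"
    by (rule homeomorphismI[OF cF cG]) (use GF FG in auto)
  have F0: "F 0 = 0" by (simp add: F_def conjm_def)
  have bF: "\<And>n z. exp (-B) * norm z \<le> norm ((F^^n) z)"
    unfolding F_def by (rule conjm_bound(1)[OF fA Bf])
  have bG: "\<And>n z. exp (-B) * norm z \<le> norm ((G^^n) z)"
    unfolding G_def by (rule conjm_bound(1)[OF gA Bg])
  obtain Vs W0 b where b0: "b > 0" and oVs: "open Vs" and oW0: "open W0"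
    and cVs: "connected Vs" and cW0: "connected W0" and disj: "Vs \<inter> W0 = {}"
    and UpVs: "-cball 0 1 \<subseteq> Vs" and bW0: "ball 0 b \<subseteq> W0"
    and h2: "Vs homeomorphic (-{0::complex})" and h1: "(W0 - {0}) homeomorphic (-{0::complex})"
    and FVs: "F ` Vs = Vs" and FW0: "F ` W0 = W0" and GVs: "G ` Vs = Vs" and GW0: "G ` W0 = W0"
    and cC: "connected (-(Vs \<union> W0))" and neC: "-(Vs \<union> W0) \<noteq> {}"
    and mini: "\<And>Q P1 P2. open P1 \<Longrightarrow> open P2 \<Longrightarrow> connected P1 \<Longrightarrow> connected P2 \<Longrightarrow> P1 \<inter> P2 = {} \<Longrightarrow>
        -{0} - Q = P1 \<union> P2 \<Longrightarrow> Q \<inter> (Vs \<union> W0) = {} \<Longrightarrow> P1 \<inter> -cball 0 1 \<noteq> {} \<Longrightarrow>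
        P2 \<inter> (ball 0 b - {0}) \<noteq> {} \<Longrightarrow> -(Vs \<union> W0) \<subseteq> Q"
    by (rule planar_main[OF hom F0 bF bG]) (rule that; assumption)
  have 0: "0 \<in> W0" using bW0 b0 by auto
  define C' where "C' = -(Vs \<union> W0)"
  have C'0: "C' \<subseteq> -{0}" using 0 unfolding C'_def by auto
  define C where "C = {a \<in> annulus. psi a \<in> C'}"
  define U1 where "U1 = {a \<in> annulus. psi a \<in> Vs}"
  define U2 where "U2 = {a \<in> annulus. psi a \<in> W0 - {0}}"
  have U2': "U2 = {a \<in> annulus. psi a \<in> W0}" unfolding U2_def using psi_nz by auto
  have Vs0: "Vs \<subseteq> -{0}" using 0 disj by auto
  have CA: "C \<subseteq> annulus" unfolding C_def by auto
  have Ceq: "C = psinv ` C'" unfolding C_def by (rule pre_eq[OF C'0])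
  have cpC: "continuous_on C' psinv" by (rule continuous_on_subset[OF cont_psinv C'0])
  have compC: "compact C"
  proof -
    have "closed C'" unfolding C'_def by (intro closed_Compl open_Un oVs oW0)
    moreover have "C' \<subseteq> cball 0 1" using UpVs unfolding C'_def by auto
    then have "bounded C'" by (rule bounded_subset[OF bounded_cball])
    ultimately have "compact C'" by (simp add: compact_eq_bounded_closed)
    then show ?thesis unfolding Ceq by (rule compact_continuous_image[OF cpC])
  qed
  have connC: "connected C" unfolding Ceq using connected_continuous_image[OF cpC] cC C'_def by simp
  have neC': "C \<noteq> {}" unfolding Ceq using neC C'_def by simp
  have AC: "annulus - C = U1 \<union> U2" unfolding C_def U1_def U2' C'_def by auto
  have U12: "U1 \<inter> U2 = {}" unfolding U1_def U2' using disj by auto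
  have oe1: "open_ess_annulus U1"
    unfolding open_ess_annulus_def
  proof (intro conjI)
    show "U1 \<subseteq> annulus" unfolding U1_def by auto
    show "openin (top_of_set annulus) U1" unfolding U1_def by (rule pre_openin[OF oVs])
    show "U1 homeomorphic annulus" unfolding U1_def by (rule pre_homeo[OF Vs0 h2])
    show "essential_in_annulus U1" unfolding U1_def
      by (rule pre_essential[of 2]) (use UpVs Vs0 in auto)
  qed
  have oe2: "open_ess_annulus U2"
    unfolding open_ess_annulus_def
  proof (intro conjI)
    show "U2 \<subseteq> annulus" unfolding U2_def by auto
    show "openin (top_of_set annulus) U2" unfolding U2_def by (rule pre_openin) (use oW0 in auto)
    show "U2 homeomorphic annulus" unfolding U2_def by (rule pre_homeo[OF _ h1]) auto
    show "essential_in_annulus U2" unfolding U2_def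
      by (rule pre_essential[of "b/2"]) (use bW0 b0 in auto)
  qed
  have up1: "nbhd_upper_end U1" unfolding nbhd_upper_end_def
  proof (intro exI[of _ 0] subsetI)
    fix a assume "a \<in> {z \<in> annulus. 0 < snd z}"
    then have a: "a \<in> annulus" "snd a > 0" by auto
    then have "norm (psi a) > 1" using norm_psi[OF a(1)] by simp
    then show "a \<in> U1" unfolding U1_def using a UpVs by auto
  qed
  have lo2: "nbhd_lower_end U2" unfolding nbhd_lower_end_def
  proof (intro exI[of _ "ln b"] subsetI)
    fix a assume "a \<in> {z \<in> annulus. snd z < ln b}"
    then have a: "a \<in> annulus" "snd a < ln b" by auto
    then have "norm (psi a) < b" using norm_psi[OF a(1)] b0 by (metis exp_less_cancel_iff exp_ln)
    then show "a \<in> U2" unfolding U2' using a bW0 by auto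
  qed
  have acC: "annular_continuum C"
    unfolding annular_continuum_def using CA compC connC neC' AC U12 oe1 oe2 up1 lo2 by blast
  have minC: "C2 = C" if C2: "annular_continuum C2" "C2 \<subseteq> C" for C2
  proof -
    obtain U1' U2' where U': "annulus - C2 = U1' \<union> U2'" "U1' \<inter> U2' = {}"
      "open_ess_annulus U1'" "open_ess_annulus U2'" "nbhd_upper_end U1'" "nbhd_lower_end U2'"
      and C2A: "C2 \<subseteq> annulus"
      using C2(1) unfolding annular_continuum_def by blast
    obtain M1 where M1: "{z \<in> annulus. snd z > M1} \<subseteq> U1'" using U'(5) unfolding nbhd_upper_end_def by blast
    obtain M2 where M2: "{z \<in> annulus. snd z < M2} \<subseteq> U2'" using U'(6) unfolding nbhd_lower_end_def by blast
    have U1A: "U1' \<subseteq> annulus" and U2A: "U2' \<subseteq> annulus" using U'(1) by auto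
    have inj: "inj_on psi annulus" by (metis inj_on_inverseI psinv_psi)
    have op: "open (psi ` U)" if "openin (top_of_set annulus) U" for U
    proof -
      have "openin (top_of_set (-{0})) (psi ` U)" by (rule homeomorphism_imp_open_map[OF homeo_psi that])
      then show ?thesis by (rule openin_open_trans) (simp add: open_Compl)
    qed
    have cp: "connected (psi ` U)" if "U homeomorphic annulus" for U
    proof -
      have "connected U" using homeomorphic_connectedness[OF that] connected_annulus by simp
      then show ?thesis by (rule connected_continuous_image[OF cont_psi])
    qed
    define Q where "Q = psi ` C2"
    define P1 where "P1 = psi ` U1'"
    define P2 where "P2 = psi ` U2'"
    have "-(Vs \<union> W0) \<subseteq> Q"
    proof (rule mini)
      show "open P1" unfolding P1_def by (rule op) (use U'(3) in \<open>simp add: open_ess_annulus_def\<close>)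
      show "open P2" unfolding P2_def by (rule op) (use U'(4) in \<open>simp add: open_ess_annulus_def\<close>)
      show "connected P1" unfolding P1_def by (rule cp) (use U'(3) in \<open>simp add: open_ess_annulus_def\<close>)
      show "connected P2" unfolding P2_def by (rule cp) (use U'(4) in \<open>simp add: open_ess_annulus_def\<close>)
      show "P1 \<inter> P2 = {}"
      proof (rule ccontr)
        assume "P1 \<inter> P2 \<noteq> {}"
        then obtain x y where xy: "x \<in> U1'" "y \<in> U2'" "psi x = psi y" unfolding P1_def P2_def by blast
        then have "x = y" using U1A U2A inj by (metis inj_onD subsetD)
        then show False using xy U'(2) by blast
      qed
      show "-{0} - Q = P1 \<union> P2"
      proof
        show "-{0} - Q \<subseteq> P1 \<union> P2"
        proof
          fix z assume z: "z \<in> -{0} - Q"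
          then have z0: "z \<noteq> 0" by auto
          have a: "psinv z \<in> annulus" by (rule psinv_in[OF z0])
          have "psinv z \<notin> C2"
          proof
            assume "psinv z \<in> C2"
            then have "psi (psinv z) \<in> Q" unfolding Q_def by blast
            then show False using z psi_psinv[OF z0] by simp
          qed
          then have "psinv z \<in> U1' \<union> U2'" using a U'(1) by blast
          then show "z \<in> P1 \<union> P2" unfolding P1_def P2_def using psi_psinv[OF z0] by (metis Un_iff image_eqI)
        qed
        show "P1 \<union> P2 \<subseteq> -{0} - Q"
        proof
          fix z assume "z \<in> P1 \<union> P2"
          then obtain a where a: "a \<in> U1' \<union> U2'" "z = psi a" unfolding P1_def P2_def by blast
          then have aA: "a \<in> annulus" "a \<notin> C2" using U'(1) by blast+
          have "z \<noteq> 0" using a psi_nz aA by simp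
          moreover have "z \<notin> Q"
          proof
            assume "z \<in> Q"
            then obtain c where "c \<in> C2" "z = psi c" unfolding Q_def by blast
            then have "c = a" using a aA C2A inj by (metis inj_onD subsetD)
            then show False using \<open>c \<in> C2\<close> aA by simp
          qed
          ultimately show "z \<in> -{0} - Q" by simp
        qed
      qed
      show "Q \<inter> (Vs \<union> W0) = {}" unfolding Q_def using C2(2) unfolding C_def C'_def by auto
      define a1 where "a1 = (1::complex, max 1 (M1 + 1))"
      have a1: "a1 \<in> annulus" "snd a1 > M1" "snd a1 > 0" unfolding a1_def by (auto simp: annulus_iff)
      then have "a1 \<in> U1'" using M1 by blast
      moreover have "norm (psi a1) > 1" using norm_psi[OF a1(1)] a1(3) by simp
      ultimately show "P1 \<inter> -cball 0 1 \<noteq> {}" unfolding P1_def by auto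
      define a2 where "a2 = (1::complex, min (M2 - 1) (ln b - 1))"
      have a2: "a2 \<in> annulus" "snd a2 < M2" "snd a2 < ln b" unfolding a2_def by (auto simp: annulus_iff)
      then have "a2 \<in> U2'" using M2 by blast
      moreover have "norm (psi a2) < b" using norm_psi[OF a2(1)] a2(3) b0 by (metis exp_less_cancel_iff exp_ln)
      moreover have "psi a2 \<noteq> 0" by (rule psi_nz[OF a2(1)])
      ultimately show "P2 \<inter> (ball 0 b - {0}) \<noteq> {}" unfolding P2_def by auto
    qed
    then have "C \<subseteq> C2"
    proof -
      assume sub: "-(Vs \<union> W0) \<subseteq> Q"
      show "C \<subseteq> C2"
      proof
        fix a assume a: "a \<in> C"
        then have "psi a \<in> Q" using sub unfolding C_def C'_def by auto
        then obtain c where c: "c \<in> C2" "psi a = psi c" unfolding Q_def by blast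
        then have "a = c" using a CA C2A inj by (metis inj_onD subsetD)
        then show "a \<in> C2" using c by simp
      qed
    qed
    then show ?thesis using C2(2) by blast
  qed
  have circ: "circloid C" unfolding circloid_def using acC minC by blast
  have FC: "F z \<in> C'" if "z \<in> C'" for z
  proof -
    have "F z \<notin> Vs"
    proof
      assume "F z \<in> Vs"
      then have "G (F z) \<in> Vs" using GVs by blast
      then show False using GF that unfolding C'_def by simp
    qed
    moreover have "F z \<notin> W0"
    proof
      assume "F z \<in> W0"
      then have "G (F z) \<in> W0" using GW0 by blast
      then show False using GF that unfolding C'_def by simp
    qed
    ultimately show ?thesis unfolding C'_def by simp
  qed
  have GC: "G z \<in> C'" if "z \<in> C'" for z
  proof -
    have "G z \<notin> Vs"
    proof
      assume "G z \<in> Vs"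
      then have "F (G z) \<in> Vs" using FVs by blast
      then show False using FG that unfolding C'_def by simp
    qed
    moreover have "G z \<notin> W0"
    proof
      assume "G z \<in> W0"
      then have "F (G z) \<in> W0" using FW0 by blast
      then show False using FG that unfolding C'_def by simp
    qed
    ultimately show ?thesis unfolding C'_def by simp
  qed
  have fC: "f ` C = C"
  proof
    show "f ` C \<subseteq> C"
    proof
      fix y assume "y \<in> f ` C"
      then obtain a where a: "a \<in> C" "y = f a" by blast
      have aA: "a \<in> annulus" using a CA by blast
      have "psi (f a) = F (psi a)" unfolding F_def by (rule conjm_psi[OF aA, symmetric])
      moreover have "psi a \<in> C'" using a unfolding C_def by blast
      ultimately have "psi (f a) \<in> C'" using FC by simp
      moreover have "f a \<in> annulus" using fA aA by blast
      ultimately show "y \<in> C" unfolding C_def using a by simp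
    qed
    show "C \<subseteq> f ` C"
    proof
      fix a assume a: "a \<in> C"
      have aA: "a \<in> annulus" using a CA by blast
      have "psi (g a) = G (psi a)" unfolding G_def by (rule conjm_psi[OF aA, symmetric])
      moreover have "psi a \<in> C'" using a unfolding C_def by blast
      ultimately have "psi (g a) \<in> C'" using GC by simp
      moreover have "g a \<in> annulus" using gA aA by blast
      ultimately have "g a \<in> C" unfolding C_def by simp
      moreover have "a = f (g a)" using fg aA by simp
      ultimately show "a \<in> f ` C" by blast
    qed
  qed
  show ?thesis using circ fC by blast
qed

end
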